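(* Let $f:\mathbb{N}\to\mathbb{R}$ with $f(1)=1$ be multiplicative, i.e. $f(mn)=f(m)f(n)$ for all coprime $m,n$. Assume there exist $C>0$ and $\gamma\in\mathbb{R}$ such that $|f(n)|\leq C n^\gamma$ for all $n\geq2$. Then $$|f^{-1}(n)| \leq \left(\frac{C}{C+1}\right)^{\omega(n)} (C+1)^{\Omega(n)} n^{\gamma}, \quad n\geq 2.$$
   Context: $f^{-1}$ denotes the Dirichlet inverse of $f$: the arithmetic function with $\sum_{d\mid n} f(n/d) f^{-1}(d)=\varepsilon(n)$ for all $n$, where $\varepsilon(1)=1$ and $\varepsilon(n)=0$ for $n\ge2$. $\omega(n)$ is the number of distinct prime factors of $n$ and $\Omega(n)$ the number of prime factors counted with multiplicity. *)

theory Defs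
  imports "HOL-Computational_Algebra.Primes" Complex_Main
begin

definition dirichlet_eps :: "nat \<Rightarrow> real" where
  "dirichlet_eps n = (if n = 1 then 1 else 0)"

definition is_dirichlet_inverse :: "(nat \<Rightarrow> real) \<Rightarrow> (nat \<Rightarrow> real) \<Rightarrow> bool" where
  "is_dirichlet_inverse f g \<longleftrightarrow>
     (\<forall>n>0. (\<Sum>d | d dvd n. f (n div d) * g d) = dirichlet_eps n)"

definition multiplicative_fn :: "(nat \<Rightarrow> real) \<Rightarrow> bool" where
  "multiplicative_fn f \<longleftrightarrow> f 1 = 1 \<and>
     (\<forall>m n. m > 0 \<longrightarrow> n > 0 \<longrightarrow> coprime m n \<longrightarrow> f (m * n) = f m * f n)"

definition omega_fn :: "nat \<Rightarrow> nat" where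
  "omega_fn n = card (prime_factors n)"

definition Omega_fn :: "nat \<Rightarrow> nat" where
  "Omega_fn n = size (prime_factorization n)"

end

theory Submission
  imports Defs
begin

lemma powr_nat_pow: "real (p^j) powr (\<gamma>::real) = (real p powr \<gamma>)^j"
  by (induction j) (auto simp: powr_mult)

lemma powr_nat_pow': "(real p ^ j) powr (\<gamma>::real) = (real p powr \<gamma>)^j"
  using powr_nat_pow[of p j \<gamma>] by simp

lemma inv_one:
  assumes "multiplicative_fn f" "is_dirichlet_inverse f g"
  shows "g 1 = 1"
proof -
  have "(\<Sum>d | d dvd (1::nat). f (1 div d) * g d) = dirichlet_eps 1"
    using assms(2) unfolding is_dirichlet_inverse_def by (metis zero_less_one)
  moreover have "{d. d dvd (1::nat)} = {1}" by auto
  ultimately show ?thesis using assms(1) by (simp add: multiplicative_fn_def dirichlet_eps_def)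
qed

lemma inv_zero:
  assumes "is_dirichlet_inverse f g" "n > 1"
  shows "(\<Sum>d | d dvd n. f (n div d) * g d) = 0"
proof -
  have "(\<Sum>d | d dvd n. f (n div d) * g d) = dirichlet_eps n"
    using assms unfolding is_dirichlet_inverse_def by (metis less_trans zero_less_one)
  thus ?thesis using assms(2) by (simp add: dirichlet_eps_def)
qed

lemma divisors_prod:
  fixes m n :: nat
  assumes "coprime m n" "m > 0" "n > 0"
  shows "(\<Sum>d | d dvd m * n. F d) = (\<Sum>(a,b) \<in> {a. a dvd m} \<times> {b. b dvd n}. F (a*b))"
proof -
  have inj: "inj_on (\<lambda>(a,b). a*b) ({a. a dvd m} \<times> {b. b dvd n})"
  proof (rule inj_onI, clarify)
    fix a1 b1 a2 b2 :: nat
    assume h: "a1 dvd m" "b1 dvd n" "a2 dvd m" "b2 dvd n" "a1 * b1 = a2 * b2"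
    have c1: "coprime a1 b2" using h assms(1) coprime_imp_coprime
      by (meson coprime_divisors)
    have c2: "coprime a2 b1" using h assms(1) by (meson coprime_divisors)
    have "a1 dvd a2 * b2" using h by (metis dvd_triv_left)
    hence "a1 dvd a2" using c1 by (simp add: coprime_dvd_mult_left_iff)
    moreover have "a2 dvd a1 * b1" using h by (metis dvd_triv_left)
    hence "a2 dvd a1" using c2 by (simp add: coprime_dvd_mult_left_iff)
    ultimately have "a1 = a2" by (simp add: dvd_antisym)
    moreover have "a1 > 0" using h assms by (metis dvd_0_left_iff not_gr0)
    ultimately show "a1 = a2 \<and> b1 = b2" using h by simp
  qed
  have img: "(\<lambda>(a,b). a*b) ` ({a. a dvd m} \<times> {b. b dvd n}) = {d. d dvd m * n}"
  proof
    show "(\<lambda>(a,b). a*b) ` ({a. a dvd m} \<times> {b. b dvd n}) \<subseteq> {d. d dvd m * n}"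
      by (auto intro: mult_dvd_mono)
  next
    show "{d. d dvd m * n} \<subseteq> (\<lambda>(a,b). a*b) ` ({a. a dvd m} \<times> {b. b dvd n})"
    proof
      fix d assume "d \<in> {d. d dvd m * n}"
      then obtain x y where "d = x * y" "x dvd m" "y dvd n" by (auto elim: dvd_productE)
      thus "d \<in> (\<lambda>(a,b). a*b) ` ({a. a dvd m} \<times> {b. b dvd n})" by force
    qed
  qed
  show ?thesis
    using sum.reindex[OF inj, of F] img by (simp add: case_prod_unfold)
qed

lemma inv_mult:
  assumes mf: "multiplicative_fn f" and inv: "is_dirichlet_inverse f g"
  shows "coprime m n \<Longrightarrow> m > 0 \<Longrightarrow> n > 0 \<Longrightarrow> g (m * n) = g m * g n"
proof (induction "m * n" arbitrary: m n rule: less_induct)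
  case less
  have g1: "g 1 = 1" using inv_one[OF mf inv] .
  have f1: "f 1 = 1" using mf by (simp add: multiplicative_fn_def)
  show ?case
  proof (cases "m = 1 \<or> n = 1")
    case True thus ?thesis using g1 by auto
  next
    case False
    hence m1: "m > 1" and n1: "n > 1" using less.prems by auto
    have mn1: "m * n > 1" using m1 n1 by (metis less_1_mult)
    define A where "A = {a. a dvd m}"
    define B where "B = {b. b dvd n}"
    have finA: "finite A" unfolding A_def using less.prems by simp
    have finB: "finite B" unfolding B_def using less.prems by simp
    have mA: "m \<in> A" and nB: "n \<in> B" unfolding A_def B_def by auto
    define T where "T = (\<lambda>(a,b). f (m div a) * g a * (f (n div b) * g b))"
    have eq: "f (m * n div (a * b)) * g (a * b) =
       T (a,b) + (if (a,b) = (m,n) then g (m*n) - g m * g n else 0)"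
      if ab: "(a,b) \<in> A \<times> B" for a b
    proof -
      have da: "a dvd m" and db: "b dvd n" using ab unfolding A_def B_def by auto
      have a0: "a > 0" and b0: "b > 0" using da db less.prems by (auto intro: dvd_pos_nat)
      have div: "m * n div (a * b) = (m div a) * (n div b)"
        using da db by (metis div_mult_div_if_dvd)
      have cp: "coprime (m div a) (n div b)"
        using less.prems(1) da db
        by (metis coprime_mult_left_iff coprime_mult_right_iff dvd_div_mult_self)
      have pos1: "m div a > 0" and pos2: "n div b > 0" using da db less.prems a0 b0
        by (auto simp: div_greater_zero_iff dvd_imp_le)
      have ff: "f (m * n div (a * b)) = f (m div a) * f (n div b)"
        using mf cp pos1 pos2 div by (simp add: multiplicative_fn_def)
      show ?thesis
      proof (cases "(a,b) = (m,n)")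
        case True
        hence "a = m" "b = n" by auto
        thus ?thesis using f1 less.prems by (simp add: T_def ff)
      next
        case F: False
        have "a * b \<le> m * n" using da db less.prems by (simp add: dvd_imp_le mult_le_mono)
        moreover have "a * b \<noteq> m * n"
        proof
          assume "a * b = m * n"
          moreover have "a \<le> m" "b \<le> n" using da db less.prems by (auto simp: dvd_imp_le)
          moreover have "a < m \<Longrightarrow> a * b < m * n"
          proof -
            assume "a < m"
            hence "a * b < m * b" using b0 by simp
            also have "\<dots> \<le> m * n" using \<open>b \<le> n\<close> by simp
            finally show ?thesis .
          qed
          moreover have "b < n \<Longrightarrow> a * b < m * n"
          proof -
            assume "b < n"
            hence "a * b < a * n" using a0 by simp
            also have "\<dots> \<le> m * n" using \<open>a \<le> m\<close> by simp
            finally show ?thesis .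
          qed
          ultimately have "a = m \<and> b = n" by linarith
          thus False using F by simp
        qed
        ultimately have lt: "a * b < m * n" by simp
        have cab: "coprime a b" using less.prems(1) da db by (meson coprime_divisors)
        have "g (a * b) = g a * g b" using less.hyps[OF lt cab a0 b0] .
        thus ?thesis using F by (auto simp: T_def ff)
      qed
    qed
    have "0 = (\<Sum>d | d dvd m * n. f (m * n div d) * g d)"
      using inv_zero[OF inv mn1] by simp
    also have "\<dots> = (\<Sum>(a,b) \<in> A \<times> B. f (m * n div (a*b)) * g (a*b))"
      unfolding A_def B_def using divisors_prod less.prems by blast
    also have "\<dots> = (\<Sum>p \<in> A \<times> B. T p + (if p = (m,n) then g (m*n) - g m * g n else 0))"
    proof (rule sum.cong[OF refl])
      fix p assume p: "p \<in> A \<times> B"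
      obtain a b where ab: "p = (a,b)" by (cases p)
      show "(case p of (a, b) \<Rightarrow> f (m * n div (a * b)) * g (a * b)) =
            T p + (if p = (m,n) then g (m*n) - g m * g n else 0)"
        using eq[of a b] p unfolding ab by (simp only: case_prod_conv)
    qed
    also have "\<dots> = (\<Sum>p \<in> A \<times> B. T p) + (\<Sum>p \<in> A \<times> B. (if p = (m,n) then g (m*n) - g m * g n else 0))"
      by (rule sum.distrib)
    also have "(\<Sum>p \<in> A \<times> B. (if p = (m,n) then g (m*n) - g m * g n else 0)) = g (m*n) - g m * g n"
      by (subst sum.delta) (auto simp: mA nB finA finB)
    also have "(\<Sum>p \<in> A \<times> B. T p) = (\<Sum>a\<in>A. f (m div a) * g a) * (\<Sum>b\<in>B. f (n div b) * g b)"
      unfolding T_def by (simp add: sum_product sum.cartesian_product)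
    also have "(\<Sum>a\<in>A. f (m div a) * g a) = 0" unfolding A_def using inv_zero[OF inv m1] .
    finally show ?thesis by simp
  qed
qed


definition aa :: "real \<Rightarrow> nat \<Rightarrow> real" where
  "aa C i = (if i = 0 then 1 else C * (C+1)^(i-1))"

lemma sum_aa: "(\<Sum>i\<le>k. aa C i) = (C+1)^k"
proof (induction k)
  case 0 thus ?case by (simp add: aa_def)
next
  case (Suc k) thus ?case by (simp add: aa_def algebra_simps)
qed

lemma inv_pp:
  assumes mf: "multiplicative_fn f" and inv: "is_dirichlet_inverse f g"
    and C: "C > 0" and fb: "\<And>n. n \<ge> 2 \<Longrightarrow> \<bar>f n\<bar> \<le> C * real n powr \<gamma>"
    and p: "prime p"
  shows "\<bar>g (p^k)\<bar> \<le> aa C k * (real p powr \<gamma>)^k"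
proof (induction k rule: less_induct)
  case (less k)
  define q where "q = real p powr \<gamma>"
  have q0: "q \<ge> 0" unfolding q_def by simp
  have g1: "g 1 = 1" using inv_one[OF mf inv] .
  have f1: "f 1 = 1" using mf by (simp add: multiplicative_fn_def)
  have p1: "p > 1" using prime_gt_1_nat[OF p(1)] by simp
  show ?case
  proof (cases k)
    case 0 thus ?thesis using g1 by (simp add: aa_def)
  next
    case (Suc k')
    have inj: "inj_on (\<lambda>i. p^i) {..k}" using p1 by (auto intro!: inj_onI simp: power_inject_exp)
    have img: "(\<lambda>i. p^i) ` {..k} = {d. d dvd p^k}"
      using divides_primepow_nat[OF p] by auto
    have pk1: "p^k > 1" using p1 Suc by (intro one_less_power) auto
    have "0 = (\<Sum>d | d dvd p^k. f (p^k div d) * g d)"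
      using inv_zero[OF inv pk1] by simp
    also have "\<dots> = (\<Sum>i\<le>k. f (p^k div p^i) * g (p^i))"
      using sum.reindex[OF inj, of "\<lambda>d. f (p^k div d) * g d"] img by simp
    also have "\<dots> = (\<Sum>i\<le>k. f (p^(k-i)) * g (p^i))"
      using p1 by (intro sum.cong refl) (simp add: power_diff)
    also have "\<dots> = (\<Sum>i\<le>k'. f (p^(k-i)) * g (p^i)) + g (p^k)"
      using Suc f1 by simp
    finally have geq: "g (p^k) = - (\<Sum>i\<le>k'. f (p^(k-i)) * g (p^i))" by linarith
    have "\<bar>g (p^k)\<bar> \<le> (\<Sum>i\<le>k'. \<bar>f (p^(k-i)) * g (p^i)\<bar>)"
      unfolding geq abs_minus_cancel by (rule sum_abs)
    also have "\<dots> \<le> (\<Sum>i\<le>k'. (C * q^(k-i)) * (aa C i * q^i))"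
    proof (rule sum_mono)
      fix i assume i: "i \<in> {..k'}"
      have "p^(k-i) \<ge> 2"
      proof -
        have "p^1 \<le> p^(k-i)" using p1 i Suc by (intro power_increasing) auto
        thus ?thesis using p1 by simp
      qed
      hence fi: "\<bar>f (p^(k-i))\<bar> \<le> C * q^(k-i)"
        using fb[of "p^(k-i)"] unfolding q_def by (simp add: powr_nat_pow')
      have gi: "\<bar>g (p^i)\<bar> \<le> aa C i * q^i"
        using less[of i] i Suc unfolding q_def by simp
      show "\<bar>f (p^(k-i)) * g (p^i)\<bar> \<le> (C * q^(k-i)) * (aa C i * q^i)"
        unfolding abs_mult by (rule mult_mono[OF fi gi]) (use C q0 in auto)
    qed
    also have "\<dots> = (\<Sum>i\<le>k'. C * q^k * aa C i)"
    proof (intro sum.cong refl)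
      fix i assume i: "i \<in> {..k'}"
      have "q^(k-i) * q^i = q^k" using i Suc by (simp add: power_add[symmetric])
      thus "(C * q^(k-i)) * (aa C i * q^i) = C * q^k * aa C i"
        by (metis mult.assoc mult.commute mult.left_commute)
    qed
    also have "\<dots> = C * q^k * (C+1)^k'" by (simp add: sum_distrib_left[symmetric] sum_aa)
    also have "\<dots> = aa C k * q^k" using Suc by (simp add: aa_def)
    finally show ?thesis unfolding q_def .
  qed
qed

lemma omega_Omega_pp:
  fixes p k m :: nat
  assumes p: "prime p" and k: "k > 0" and m: "m > 0" and nd: "\<not> p dvd m"
  shows "omega_fn (p^k * m) = Suc (omega_fn m)" "Omega_fn (p^k * m) = k + Omega_fn m"
proof -
  have pf: "prime_factorization (p^k * m) = replicate_mset k p + prime_factorization m"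
    using p m by (simp add: prime_factorization_mult prime_factorization_prime_power prime_gt_0_nat)
  have "p \<notin> prime_factors m" using nd by auto
  moreover have "set_mset (replicate_mset k p) = {p}" using k by simp
  ultimately show "omega_fn (p^k * m) = Suc (omega_fn m)"
    unfolding omega_fn_def pf by simp
  show "Omega_fn (p^k * m) = k + Omega_fn m"
    unfolding Omega_fn_def pf by simp
qed

theorem proposition3p2:
  fixes f g :: "nat \<Rightarrow> real" and C \<gamma> :: real
  assumes "multiplicative_fn f"
    and "C > 0"
    and "\<And>n. n \<ge> 2 \<Longrightarrow> \<bar>f n\<bar> \<le> C * real n powr \<gamma>"
    and "is_dirichlet_inverse f g"
    and "n \<ge> 2"
  shows "\<bar>g n\<bar> \<le> (C / (C + 1)) ^ omega_fn n * (C + 1) ^ Omega_fn n * real n powr \<gamma>"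
proof -
  define B where "B = (\<lambda>n. (C / (C + 1)) ^ omega_fn n * (C + 1) ^ Omega_fn n * real n powr \<gamma>)"
  have B0: "B n \<ge> 0" for n using assms(2) unfolding B_def by simp
  have "n > 0 \<Longrightarrow> \<bar>g n\<bar> \<le> B n" for n
  proof (induction n rule: less_induct)
    case (less n)
    show ?case
    proof (cases "n = 1")
      case True
      thus ?thesis using inv_one[OF assms(1,4)]
        by (simp add: B_def omega_fn_def Omega_fn_def)
    next
      case False
      then obtain p where p: "prime p" "p dvd n" using prime_factor_nat by blast
      define k where "k = multiplicity p n"
      have "\<exists>m. n = p^k * m \<and> \<not> p dvd m"
        unfolding k_def
        apply (rule multiplicity_decompose'[where x=n and p=p])
        using less.prems apply simp
        using p(1) apply (metis not_prime_unit)
        apply blast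
        done
      then obtain m where nm: "n = p^k * m" and nd: "\<not> p dvd m" by blast
      have k0: "k > 0" using nm nd p(2) by (cases k) auto
      have m0: "m > 0" using nm less.prems by (cases m) auto
      have p1: "p > 1" using prime_gt_1_nat[OF p(1)] by simp
      have pk1: "p^k > 1" using p1 k0 by (intro one_less_power) auto
      have mn: "m < n" using nm pk1 m0 by simp
      have cop: "coprime (p^k) m"
        using p nd by (simp add: prime_imp_coprime)
      have gmul: "g n = g (p^k) * g m"
        using inv_mult[OF assms(1,4) cop] m0 p1 nm by simp
      have gm: "\<bar>g m\<bar> \<le> B m" using less.IH[OF mn m0] .
      have gp: "\<bar>g (p^k)\<bar> \<le> aa C k * (real p powr \<gamma>)^k"
        using inv_pp[OF assms(1,4,2,3) p(1)] .
      have "aa C k * (real p powr \<gamma>)^k = C / (C+1) * (C+1)^k * real (p^k) powr \<gamma>"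
        unfolding powr_nat_pow using k0 assms(2) by (cases k) (auto simp: aa_def field_simps)
      hence "B n = (aa C k * (real p powr \<gamma>)^k) * B m"
        unfolding B_def nm omega_Omega_pp[OF p(1) k0 m0 nd]
        by (simp add: powr_mult power_add)
      moreover have "\<bar>g n\<bar> \<le> (aa C k * (real p powr \<gamma>)^k) * B m"
        unfolding gmul abs_mult by (rule mult_mono[OF gp gm]) (use B0 assms(2) in \<open>auto simp: aa_def\<close>)
      ultimately show ?thesis by simp
    qed
  qed
  thus ?thesis using assms(5) unfolding B_def by simp
qed

end
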